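(* Let $A$ be a self-adjoint operator on a separable Hilbert space $\mathfrak H$ with dense domain $D(A)$. Let $K\ge1$ and for each $n$ let $(x_n^1,\dots,x_n^K)$ be an orthonormal system of vectors in $D(A)$ such that $x_n^j\rightharpoonup0$ weakly as $n\to\infty$ for every $j=1,\dots,K$. Let $W_n=\mathrm{span}(x_n^1,\dots,x_n^K)$. If $\lambda\in\mathbb R$ satisfies $\lim_{n\to\infty}\mathrm{dist}(\lambda,\sigma(A_{|W_n}))=0$, then $\lambda\in\mathrm{Spu}(A)\cup\sigma(A)$.
   Context: $D(A)$ carries the graph norm $\|x\|_{D(A)}^2=\|x\|^2+\|Ax\|^2$. For a finite-dimensional subspace $V\subset D(A)$, $P_V$ denotes the orthogonal projector onto $V$ and $A_{|V}$ the self-adjoint operator on $V$ given by the restriction of $P_VAP_V$ to $V$. A real number $\lambda$ is a spurious eigenvalue of $A$ (written $\lambda\in\mathrm{Spu}(A)$) if there is a sequence of finite-dimensional subspaces $V_n\subset D(A)$ with $V_n\subset V_{n+1}$ such that (i) $\bigcup_n V_n$ is dense in $D(A)$ for the graph norm; (ii) $\lim_{n\to\infty}\mathrm{dist}(\lambda,\sigma(A_{|V_n}))=0$; (iii) $\lambda\notin\sigma(A)$. *)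

theory Defs
  imports "HOL-Analysis.Analysis"
begin

text \<open>A complex Hilbert space, presented as a real Hilbert space together with an
orthogonal complex structure cJ (multiplication by the imaginary unit).\<close>

class chilbert = real_inner + complete_space +
  fixes cJ :: "'a \<Rightarrow> 'a"
  assumes cJ_add: "cJ (x + y) = cJ x + cJ y"
    and cJ_scaleR: "cJ (r *\<^sub>R x) = r *\<^sub>R cJ x"
    and cJ_cJ: "cJ (cJ x) = - x"
    and cJ_inner: "inner (cJ x) (cJ y) = inner x y"

text \<open>Complex scalar multiplication and the complex inner product
(conjugate-linear in the first, linear in the second argument).\<close>

definition scaleC :: "complex \<Rightarrow> 'a::chilbert \<Rightarrow> 'a" where
  "scaleC c x = Re c *\<^sub>R x + Im c *\<^sub>R cJ x"

definition cinner :: "'a::chilbert \<Rightarrow> 'a \<Rightarrow> complex" where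
  "cinner x y = Complex (inner x y) (- inner x (cJ y))"

definition csubspace :: "'a::chilbert set \<Rightarrow> bool" where
  "csubspace S \<longleftrightarrow> 0 \<in> S \<and> (\<forall>x\<in>S. \<forall>y\<in>S. x + y \<in> S) \<and> (\<forall>c. \<forall>x\<in>S. scaleC c x \<in> S)"

definition cspan :: "'a::chilbert set \<Rightarrow> 'a set" where
  "cspan S = {x. \<exists>F c. finite F \<and> F \<subseteq> S \<and> x = (\<Sum>v\<in>F. scaleC (c v) v)}"

definition fin_dim_csubspace :: "'a::chilbert set \<Rightarrow> bool" where
  "fin_dim_csubspace V \<longleftrightarrow> (\<exists>B. finite B \<and> V = cspan B)"

definition cproj :: "'a::chilbert set \<Rightarrow> 'a \<Rightarrow> 'a" where
  "cproj V x = (THE p. p \<in> V \<and> (\<forall>v\<in>V. cinner v (x - p) = 0))"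

definition self_adjoint :: "'a::chilbert set \<Rightarrow> ('a \<Rightarrow> 'a) \<Rightarrow> bool" where
  "self_adjoint D A \<longleftrightarrow>
     csubspace D \<and> closure D = UNIV \<and>
     (\<forall>x\<in>D. \<forall>y\<in>D. A (x + y) = A x + A y) \<and>
     (\<forall>c. \<forall>x\<in>D. A (scaleC c x) = scaleC c (A x)) \<and>
     (\<forall>x\<in>D. \<forall>y\<in>D. cinner (A x) y = cinner x (A y)) \<and>
     (\<forall>y z. (\<forall>x\<in>D. cinner (A x) y = cinner x z) \<longrightarrow> y \<in> D)"

definition op_spectrum :: "'a::chilbert set \<Rightarrow> ('a \<Rightarrow> 'a) \<Rightarrow> complex set" where
  "op_spectrum D A = {z. \<not> (inj_on (\<lambda>x. A x - scaleC z x) D \<and>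
       (\<lambda>x. A x - scaleC z x) ` D = UNIV \<and>
       (\<exists>C. \<forall>x\<in>D. norm x \<le> C * norm (A x - scaleC z x)))}"

text \<open>Spectrum of the compression A_{|V} = P_V A P_V restricted to V (its eigenvalues).\<close>
definition compr_spectrum :: "'a::chilbert set \<Rightarrow> ('a \<Rightarrow> 'a) \<Rightarrow> complex set" where
  "compr_spectrum V A = {\<mu>. \<exists>v\<in>V. v \<noteq> 0 \<and> cproj V (A v) = scaleC \<mu> v}"

definition Spu :: "'a::chilbert set \<Rightarrow> ('a \<Rightarrow> 'a) \<Rightarrow> real set" where
  "Spu D A = {lam. \<exists>V :: nat \<Rightarrow> 'a set.
      (\<forall>n. fin_dim_csubspace (V n) \<and> V n \<subseteq> D \<and> V n \<subseteq> V (Suc n)) \<and>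
      (\<forall>x\<in>D. \<forall>e>0. \<exists>n. \<exists>y\<in>V n.
          sqrt ((norm (x - y))\<^sup>2 + (norm (A x - A y))\<^sup>2) < e) \<and>
      (\<lambda>n. infdist (complex_of_real lam) (compr_spectrum (V n) A)) \<longlonglongrightarrow> 0 \<and>
      complex_of_real lam \<notin> op_spectrum D A}"

end

theory Submission
  imports Defs "Jordan_Normal_Form.Spectral_Radius"
begin


lemma linear_cJ: "linear (cJ :: 'a::chilbert \<Rightarrow> 'a)"
  by (rule linearI) (simp_all add: cJ_add cJ_scaleR)

lemmas cJ_0[simp] = linear_0[OF linear_cJ]
lemmas cJ_minus[simp] = linear_neg[OF linear_cJ]
lemmas cJ_diff[simp] = linear_diff[OF linear_cJ]
lemmas cJ_sum = linear_sum[OF linear_cJ]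
lemmas cJ_add' [simp] = cJ_add
lemmas cJ_scaleR' [simp] = cJ_scaleR
lemmas cJ_cJ' [simp] = cJ_cJ

lemma inner_cJ_left: "inner (cJ x) y = - inner x (cJ (y::'a::chilbert))"
proof -
  have "inner (cJ x) y = inner (cJ (cJ x)) (cJ y)" by (simp only: cJ_inner)
  thus ?thesis by simp
qed

lemma inner_cJ_self[simp]: "inner x (cJ (x::'a::chilbert)) = 0"
  using inner_cJ_left[of x x] by (simp add: inner_commute)

lemma inner_cJ_self'[simp]: "inner (cJ x) (x::'a::chilbert) = 0"
  using inner_cJ_self[of x] by (simp add: inner_commute)

lemma norm_cJ[simp]: "norm (cJ (x::'a::chilbert)) = norm x"
  by (simp add: norm_eq_sqrt_inner cJ_inner)

lemma Re_cinner[simp]: "Re (cinner x y) = inner x y" by (simp add: cinner_def)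
lemma Im_cinner[simp]: "Im (cinner x y) = - inner x (cJ y)" by (simp add: cinner_def)

lemma scaleC_real[simp]: "scaleC (complex_of_real r) x = r *\<^sub>R x"
  by (simp add: scaleC_def)
lemma scaleC_one[simp]: "scaleC 1 x = x" by (simp add: scaleC_def)
lemma scaleC_zero_left[simp]: "scaleC 0 x = 0" by (simp add: scaleC_def)
lemma scaleC_zero_right[simp]: "scaleC c 0 = 0" by (simp add: scaleC_def)
lemma scaleC_add_right: "scaleC c (x + y) = scaleC c x + scaleC c y"
  by (simp add: scaleC_def algebra_simps)
lemma scaleC_add_left: "scaleC (c + d) x = scaleC c x + scaleC d x"
  by (simp add: scaleC_def algebra_simps)
lemma scaleC_scaleC: "scaleC c (scaleC d x) = scaleC (c * d) x"
  by (simp add: scaleC_def algebra_simps)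
lemma scaleC_minus_one: "scaleC (-1) x = - x"
  by (simp add: scaleC_def)

lemma cinner_add_right: "cinner x (y + z) = cinner x y + cinner x z"
  by (rule complex_eqI) (simp_all add: inner_add_right)
lemma cinner_add_left: "cinner (x + y) z = cinner x z + cinner y z"
  by (rule complex_eqI) (simp_all add: inner_add_left)
lemma cinner_diff_right: "cinner x (y - z) = cinner x y - cinner x z"
  by (rule complex_eqI) (simp_all add: inner_diff_right)
lemma cinner_diff_left: "cinner (x - y) z = cinner x z - cinner y z"
  by (rule complex_eqI) (simp_all add: inner_diff_left)
lemma cinner_zero_left[simp]: "cinner 0 x = 0"
  by (rule complex_eqI) simp_all
lemma cinner_zero_right[simp]: "cinner x 0 = 0"
  by (rule complex_eqI) simp_all
lemma cinner_scaleC_right: "cinner x (scaleC c y) = c * cinner x y"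
  by (rule complex_eqI) (simp_all add: scaleC_def inner_add_right algebra_simps)
lemma cinner_scaleC_left: "cinner (scaleC c x) y = cnj c * cinner x y"
  by (rule complex_eqI) (simp_all add: scaleC_def inner_add_left inner_cJ_left cJ_inner algebra_simps)
lemma cinner_self: "cinner x x = complex_of_real ((norm x)\<^sup>2)"
  by (rule complex_eqI) (simp_all add: power2_norm_eq_inner)
lemma cinner_commute: "cinner y x = cnj (cinner x y)"
proof -
  have "inner y (cJ x) = - inner x (cJ y)" by (metis inner_commute inner_cJ_left)
  thus ?thesis by (intro complex_eqI) (simp_all add: inner_commute)
qed
lemma cinner_sum_left: "cinner (sum f S) y = (\<Sum>i\<in>S. cinner (f i) y)"
  by (induction S rule: infinite_finite_induct) (simp_all add: cinner_add_left)
lemma cinner_sum_right: "cinner y (sum f S) = (\<Sum>i\<in>S. cinner y (f i))"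
  by (induction S rule: infinite_finite_induct) (simp_all add: cinner_add_right)
lemma cinner_eq_0_iff: "cinner g w = 0 \<longleftrightarrow> inner g w = 0 \<and> inner (cJ g) w = 0"
  by (simp add: complex_eq_iff inner_cJ_left)

lemma scaleC_diff_left: "scaleC (c - d) x = scaleC c x - scaleC d x"
  by (simp add: scaleC_def algebra_simps)
lemma scaleC_diff_right: "scaleC c (x - y) = scaleC c x - scaleC c y"
  by (simp add: scaleC_def algebra_simps)

lemma csubspace_add: "csubspace V \<Longrightarrow> x \<in> V \<Longrightarrow> y \<in> V \<Longrightarrow> x + y \<in> V"
  by (simp add: csubspace_def)
lemma csubspace_scaleC: "csubspace V \<Longrightarrow> x \<in> V \<Longrightarrow> scaleC c x \<in> V"
  by (simp add: csubspace_def)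
lemma csubspace_0: "csubspace V \<Longrightarrow> 0 \<in> V"
  by (simp add: csubspace_def)
lemma csubspace_scaleR: "csubspace V \<Longrightarrow> x \<in> V \<Longrightarrow> r *\<^sub>R x \<in> V"
  using csubspace_scaleC[of V x "complex_of_real r"] by simp
lemma csubspace_diff: "csubspace V \<Longrightarrow> x \<in> V \<Longrightarrow> y \<in> V \<Longrightarrow> x - y \<in> V"
  using csubspace_add[of V x "scaleC (-1) y"] csubspace_scaleC[of V y "-1"]
  by (simp add: scaleC_minus_one)
lemma csubspace_sum: "csubspace V \<Longrightarrow> (\<And>i. i \<in> I \<Longrightarrow> f i \<in> V) \<Longrightarrow> sum f I \<in> V"
  by (induction I rule: infinite_finite_induct) (auto simp: csubspace_0 csubspace_add)

lemma csubspace_cspan: "csubspace (cspan S)"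
  unfolding csubspace_def
proof (intro conjI ballI allI)
  show "0 \<in> cspan S" unfolding cspan_def by (rule CollectI, rule exI[of _ "{}"]) simp
next
  fix x y assume "x \<in> cspan S" "y \<in> cspan S"
  then obtain F1 c1 F2 c2 where F1: "finite F1" "F1 \<subseteq> S" "x = (\<Sum>v\<in>F1. scaleC (c1 v) v)"
    and F2: "finite F2" "F2 \<subseteq> S" "y = (\<Sum>v\<in>F2. scaleC (c2 v) v)"
    unfolding cspan_def by blast
  define c where "c v = (if v \<in> F1 then c1 v else 0) + (if v \<in> F2 then c2 v else 0)" for v
  have "(\<Sum>v\<in>F1 \<union> F2. scaleC (c v) v) = (\<Sum>v\<in>F1 \<union> F2. scaleC (if v \<in> F1 then c1 v else 0) v)
      + (\<Sum>v\<in>F1 \<union> F2. scaleC (if v \<in> F2 then c2 v else 0) v)"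
    by (simp add: c_def scaleC_add_left sum.distrib)
  also have "(\<Sum>v\<in>F1 \<union> F2. scaleC (if v \<in> F1 then c1 v else 0) v) = (\<Sum>v\<in>F1. scaleC (c1 v) v)"
    by (rule sum.mono_neutral_cong_right) (use F1 F2 in auto)
  also have "(\<Sum>v\<in>F1 \<union> F2. scaleC (if v \<in> F2 then c2 v else 0) v) = (\<Sum>v\<in>F2. scaleC (c2 v) v)"
    by (rule sum.mono_neutral_cong_right) (use F1 F2 in auto)
  finally have e: "x + y = (\<Sum>v\<in>F1 \<union> F2. scaleC (c v) v)" using F1 F2 by simp
  show "x + y \<in> cspan S" unfolding cspan_def
    by (rule CollectI, rule exI[of _ "F1 \<union> F2"], rule exI[of _ c]) (use F1 F2 e in auto)
next
  fix c x assume "x \<in> cspan S"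
  then obtain F c1 where F: "finite F" "F \<subseteq> S" "x = (\<Sum>v\<in>F. scaleC (c1 v) v)"
    unfolding cspan_def by blast
  have "scaleC c x = (\<Sum>v\<in>F. scaleC (c * c1 v) v)"
    unfolding F(3) by (induction F rule: infinite_finite_induct) (simp_all add: scaleC_add_right scaleC_scaleC)
  thus "scaleC c x \<in> cspan S" unfolding cspan_def
    by (intro CollectI exI[of _ F] exI[of _ "\<lambda>v. c * c1 v"]) (use F in auto)
qed

lemma cspan_superset: "x \<in> S \<Longrightarrow> x \<in> cspan S"
  unfolding cspan_def by (rule CollectI, rule exI[of _ "{x}"], rule exI[of _ "\<lambda>_. 1"]) simp

lemma cspan_mono: "S \<subseteq> T \<Longrightarrow> cspan S \<subseteq> cspan T"
  unfolding cspan_def by blast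

lemma cspan_subset: "csubspace D \<Longrightarrow> S \<subseteq> D \<Longrightarrow> cspan S \<subseteq> D"
  unfolding cspan_def by (auto intro!: csubspace_sum csubspace_scaleC)

lemma cspan_orth: "(\<And>b. b \<in> S \<Longrightarrow> cinner b z = 0) \<Longrightarrow> v \<in> cspan S \<Longrightarrow> cinner v z = 0"
  unfolding cspan_def by (auto simp: cinner_sum_left cinner_scaleC_left subset_iff)

lemma cproj_eqI:
  assumes V: "csubspace V" and p: "p \<in> V" and orth: "\<And>v. v \<in> V \<Longrightarrow> cinner v (z - p) = 0"
  shows "cproj V z = p"
  unfolding cproj_def
proof (rule the_equality)
  show "p \<in> V \<and> (\<forall>v\<in>V. cinner v (z - p) = 0)" using p orth by auto
next
  fix q assume q: "q \<in> V \<and> (\<forall>v\<in>V. cinner v (z - q) = 0)"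
  have d: "q - p \<in> V" using csubspace_diff[OF V] q p by auto
  have "cinner (q - p) (z - p) - cinner (q - p) (z - q) = 0" using orth[OF d] q d by auto
  hence "cinner (q - p) (q - p) = 0" by (simp add: cinner_diff_right algebra_simps)
  hence "norm (q - p) = 0" by (simp add: cinner_self)
  thus "q = p" by simp
qed

lemma scaleC_sum_right_aux: "scaleC c (sum f S) = (\<Sum>i\<in>S. scaleC c (f i))"
  by (induction S rule: infinite_finite_induct) (simp_all add: scaleC_add_right)



lemma exists_orth_comb:
  fixes G :: "'a::real_inner set" and y :: "'b \<Rightarrow> 'a"
  assumes "finite G" "finite F" "card G < card F"
  shows "\<exists>a. (\<exists>j\<in>F. a j \<noteq> 0) \<and> (\<forall>g\<in>G. inner g (\<Sum>j\<in>F. a j *\<^sub>R y j) = 0)"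
  using assms(1,2,3)
proof (induction G arbitrary: F y rule: finite_induct)
  case empty
  then obtain j where "j \<in> F" by fastforce
  thus ?case by (intro exI[of _ "\<lambda>_. 1"]) auto
next
  case (insert g G)
  have cG: "card G < card F" using insert by simp
  show ?case
  proof (cases "\<forall>j\<in>F. inner g (y j) = 0")
    case True
    obtain a where a: "\<exists>j\<in>F. a j \<noteq> 0" "\<forall>g\<in>G. inner g (\<Sum>j\<in>F. a j *\<^sub>R y j) = 0"
      using insert.IH[OF insert.prems(1) cG] by blast
    have "inner g (\<Sum>j\<in>F. a j *\<^sub>R y j) = 0" using True by (simp add: inner_sum_right)
    thus ?thesis using a by auto
  next
    case False
    then obtain k where k: "k \<in> F" "inner g (y k) \<noteq> 0" by auto
    define F' where "F' = F - {k}"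
    define y' where "y' j = y j - (inner g (y j) / inner g (y k)) *\<^sub>R y k" for j
    have fF': "finite F'" using insert by (simp add: F'_def)
    have cF': "card G < card F'" using insert k by (simp add: F'_def)
    obtain a' where a': "\<exists>j\<in>F'. a' j \<noteq> 0" "\<forall>g\<in>G. inner g (\<Sum>j\<in>F'. a' j *\<^sub>R y' j) = 0"
      using insert.IH[OF fF' cF', of y'] by blast
    define a where "a j = (if j = k then - (\<Sum>i\<in>F'. a' i * inner g (y i)) / inner g (y k) else a' j)" for j
    have "(\<Sum>j\<in>F. a j *\<^sub>R y j) = a k *\<^sub>R y k + (\<Sum>j\<in>F'. a j *\<^sub>R y j)"
      unfolding F'_def using k insert.prems(1) by (simp add: sum.remove)
    also have "(\<Sum>j\<in>F'. a j *\<^sub>R y j) = (\<Sum>j\<in>F'. a' j *\<^sub>R y j)"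
      by (rule sum.cong) (auto simp: a_def F'_def)
    also have "a k *\<^sub>R y k + (\<Sum>j\<in>F'. a' j *\<^sub>R y j) = (\<Sum>j\<in>F'. a' j *\<^sub>R y' j)"
      by (simp add: a_def y'_def scaleR_diff_right sum_subtractf scaleR_sum_left[symmetric]
          sum_divide_distrib[symmetric] algebra_simps)
    finally have e: "(\<Sum>j\<in>F. a j *\<^sub>R y j) = (\<Sum>j\<in>F'. a' j *\<^sub>R y' j)" .
    have "inner g (\<Sum>j\<in>F'. a' j *\<^sub>R y' j) = 0"
      using k(2) by (simp add: inner_sum_right y'_def inner_diff_right)
    moreover have "\<exists>j\<in>F. a j \<noteq> 0" using a' by (auto simp: a_def F'_def)
    ultimately show ?thesis using a' e by auto
  qed
qed

lemma quad_bound: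
  fixes a :: "nat \<Rightarrow> real"
  assumes E: "\<And>i j. i < N \<Longrightarrow> j < N \<Longrightarrow> \<bar>E i j\<bar> \<le> \<eta>"
  shows "\<bar>\<Sum>i<N. \<Sum>j<N. a i * a j * E i j\<bar> \<le> \<eta> * N * (\<Sum>i<N. (a i)\<^sup>2)"
proof -
  have "\<bar>\<Sum>i<N. \<Sum>j<N. a i * a j * E i j\<bar> \<le> (\<Sum>i<N. \<Sum>j<N. \<bar>a i * a j * E i j\<bar>)"
    by (rule order.trans[OF sum_abs]) (intro sum_mono sum_abs)
  also have "\<dots> \<le> (\<Sum>i<N. \<Sum>j<N. \<bar>a i\<bar> * \<bar>a j\<bar> * \<eta>)"
    by (intro sum_mono) (auto simp: abs_mult intro!: mult_left_mono E)
  also have "\<dots> = \<eta> * (\<Sum>i<N. \<bar>a i\<bar>)\<^sup>2"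
    by (simp add: power2_eq_square sum_distrib_left sum_distrib_right algebra_simps)
  also have "\<dots> \<le> \<eta> * ((\<Sum>i<N. (\<bar>a i\<bar>)\<^sup>2) * N)"
  proof (cases "N = 0")
    case True thus ?thesis by simp
  next
    case False
    hence "0 \<le> \<eta>" using E[of 0 0] by auto
    thus ?thesis using sum_squared_le_sum_of_squares[of "\<lambda>i. \<bar>a i\<bar>" "{..<N}"]
      by (intro mult_left_mono) auto
  qed
  finally show ?thesis by (simp add: algebra_simps)
qed



context
  fixes D :: "'a::chilbert set" and A :: "'a \<Rightarrow> 'a"
  assumes sa: "self_adjoint D A"
begin

lemma csubD: "csubspace D" using sa by (simp add: self_adjoint_def)

lemma sa_inner: "x \<in> D \<Longrightarrow> y \<in> D \<Longrightarrow> inner (A x) y = inner x (A y)"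
  using sa unfolding self_adjoint_def by (metis Re_cinner)

lemma sa_cinner: "x \<in> D \<Longrightarrow> y \<in> D \<Longrightarrow> cinner (A x) y = cinner x (A y)"
  using sa unfolding self_adjoint_def by blast

lemma A_add: "x \<in> D \<Longrightarrow> y \<in> D \<Longrightarrow> A (x + y) = A x + A y"
  using sa unfolding self_adjoint_def by blast

lemma A_scaleC: "x \<in> D \<Longrightarrow> A (scaleC c x) = scaleC c (A x)"
  using sa unfolding self_adjoint_def by blast

lemma A_scaleR: "x \<in> D \<Longrightarrow> A (r *\<^sub>R x) = r *\<^sub>R A x"
  using A_scaleC[of x "complex_of_real r"] by simp

lemma A_sum: "(\<And>i. i \<in> I \<Longrightarrow> f i \<in> D) \<Longrightarrow> A (sum f I) = (\<Sum>i\<in>I. A (f i))"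
proof (induction I rule: infinite_finite_induct)
  case (infinite I) thus ?case using A_scaleR[OF csubspace_0[OF csubD], of 0] by simp
next
  case empty thus ?case using A_scaleR[OF csubspace_0[OF csubD], of 0] by simp
next
  case (insert i I)
  have "sum f I \<in> D" using insert by (intro csubspace_sum[OF csubD]) auto
  thus ?case using insert by (simp add: A_add)
qed

lemma rayleigh_real: "w \<in> D \<Longrightarrow> cinner w (A w) = complex_of_real (inner w (A w))"
proof -
  assume w: "w \<in> D"
  have "cinner (A w) w = cinner w (A w)" using sa_cinner[OF w w] .
  hence "cnj (cinner w (A w)) = cinner w (A w)" by (metis cinner_commute)
  thus ?thesis by (auto simp: complex_eq_iff)
qed

context
  fixes z :: "nat \<Rightarrow> 'a" and lam :: real
  assumes zD: "\<And>n. z n \<in> D" and zn: "\<And>n. norm (z n) = 1"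
    and zweak: "\<And>f. (\<lambda>n. inner f (z n)) \<longlonglongrightarrow> 0"
    and zray: "(\<lambda>n. inner (z n) (A (z n))) \<longlonglongrightarrow> lam"
begin

lemma index_list:
  assumes eta: "\<eta> > 0"
  shows "\<exists>l::nat list. length l = N \<and>
    (\<forall>i<N. \<forall>j<N. i < j \<longrightarrow> \<bar>inner (z (l!i)) (z (l!j))\<bar> \<le> \<eta> \<and> \<bar>inner (A (z (l!i))) (z (l!j))\<bar> \<le> \<eta>) \<and>
    (\<forall>i<N. \<bar>inner (z (l!i)) (A (z (l!i))) - lam\<bar> \<le> \<eta>)"
proof (induction N)
  case 0 show ?case by simp
next
  case (Suc N)
  then obtain l where l: "length l = N"
    "\<forall>i<N. \<forall>j<N. i < j \<longrightarrow> \<bar>inner (z (l!i)) (z (l!j))\<bar> \<le> \<eta> \<and> \<bar>inner (A (z (l!i))) (z (l!j))\<bar> \<le> \<eta>"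
    "\<forall>i<N. \<bar>inner (z (l!i)) (A (z (l!i))) - lam\<bar> \<le> \<eta>" by blast
  have ev1: "\<forall>i\<in>{..<N}. eventually (\<lambda>n. \<bar>inner (z (l!i)) (z n)\<bar> \<le> \<eta> \<and> \<bar>inner (A (z (l!i))) (z n)\<bar> \<le> \<eta>) sequentially"
  proof
    fix i
    have "eventually (\<lambda>n. dist (inner (z (l!i)) (z n)) 0 < \<eta>) sequentially"
      by (rule tendstoD[OF zweak eta])
    moreover have "eventually (\<lambda>n. dist (inner (A (z (l!i))) (z n)) 0 < \<eta>) sequentially"
      by (rule tendstoD[OF zweak eta])
    ultimately show "eventually (\<lambda>n. \<bar>inner (z (l!i)) (z n)\<bar> \<le> \<eta> \<and> \<bar>inner (A (z (l!i))) (z n)\<bar> \<le> \<eta>) sequentially"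
      by eventually_elim auto
  qed
  have "eventually (\<lambda>n. \<forall>i\<in>{..<N}. \<bar>inner (z (l!i)) (z n)\<bar> \<le> \<eta> \<and> \<bar>inner (A (z (l!i))) (z n)\<bar> \<le> \<eta>) sequentially"
    by (rule eventually_ball_finite[OF _ ev1]) simp
  moreover have "eventually (\<lambda>n. dist (inner (z n) (A (z n))) lam < \<eta>) sequentially"
    by (rule tendstoD[OF zray eta])
  ultimately have "eventually (\<lambda>n. (\<forall>i\<in>{..<N}. \<bar>inner (z (l!i)) (z n)\<bar> \<le> \<eta> \<and> \<bar>inner (A (z (l!i))) (z n)\<bar> \<le> \<eta>)
     \<and> \<bar>inner (z n) (A (z n)) - lam\<bar> \<le> \<eta>) sequentially"
    by eventually_elim (auto simp: dist_real_def)
  then obtain n where n: "\<forall>i\<in>{..<N}. \<bar>inner (z (l!i)) (z n)\<bar> \<le> \<eta> \<and> \<bar>inner (A (z (l!i))) (z n)\<bar> \<le> \<eta>"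
    "\<bar>inner (z n) (A (z n)) - lam\<bar> \<le> \<eta>"
    unfolding eventually_sequentially by blast
  have L: "length (l @ [n]) = Suc N" using l by simp
  have P: "\<forall>i<Suc N. \<forall>j<Suc N. i < j \<longrightarrow> \<bar>inner (z ((l @ [n]) ! i)) (z ((l @ [n]) ! j))\<bar> \<le> \<eta> \<and>
          \<bar>inner (A (z ((l @ [n]) ! i))) (z ((l @ [n]) ! j))\<bar> \<le> \<eta>"
  proof (intro allI impI)
    fix i j assume ij: "i < Suc N" "j < Suc N" "i < j"
    hence iN: "i < N" by simp
    show "\<bar>inner (z ((l @ [n]) ! i)) (z ((l @ [n]) ! j))\<bar> \<le> \<eta> \<and>
          \<bar>inner (A (z ((l @ [n]) ! i))) (z ((l @ [n]) ! j))\<bar> \<le> \<eta>"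
    proof (cases "j < N")
      case True thus ?thesis using l ij iN by (simp add: nth_append)
    next
      case False hence "j = N" using ij by simp
      thus ?thesis using l n iN by (simp add: nth_append)
    qed
  qed
  have Q: "\<forall>i<Suc N. \<bar>inner (z ((l @ [n]) ! i)) (A (z ((l @ [n]) ! i))) - lam\<bar> \<le> \<eta>"
  proof (intro allI impI)
    fix i assume i: "i < Suc N"
    show "\<bar>inner (z ((l @ [n]) ! i)) (A (z ((l @ [n]) ! i))) - lam\<bar> \<le> \<eta>"
    proof (cases "i < N")
      case True thus ?thesis using l by (simp add: nth_append)
    next
      case False hence "i = N" using i by simp
      thus ?thesis using l n by (simp add: nth_append)
    qed
  qed
  show ?case using L P Q by blast
qed

lemma family:
  fixes N :: nat
  assumes eta: "\<eta> > 0"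
  shows "\<exists>y. (\<forall>j. (y::nat\<Rightarrow>'a) j \<in> D) \<and> (\<forall>i<N. \<forall>j<N.
     \<bar>inner (y i) (y j) - (if i = j then 1 else 0)\<bar> \<le> \<eta> \<and>
     \<bar>inner (y i) (A (y j)) - (if i = j then lam else 0)\<bar> \<le> \<eta>)"
proof -
  obtain l where l: "length l = N"
    "\<forall>i<N. \<forall>j<N. i < j \<longrightarrow> \<bar>inner (z (l!i)) (z (l!j))\<bar> \<le> \<eta> \<and> \<bar>inner (A (z (l!i))) (z (l!j))\<bar> \<le> \<eta>"
    "\<forall>i<N. \<bar>inner (z (l!i)) (A (z (l!i))) - lam\<bar> \<le> \<eta>" using index_list[OF eta] by blast
  define y where "y i = z (l!i)" for i
  have diag: "inner (y i) (y i) = 1" for i using zn[of "l!i"] by (simp add: y_def power2_norm_eq_inner[symmetric])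
  show ?thesis
  proof (intro exI[of _ y] conjI allI impI)
    show "y j \<in> D" for j using zD by (simp add: y_def)
  next
    fix i j assume ij: "i < N" "j < N"
    consider "i = j" | "i < j" | "j < i" by linarith
    thus "\<bar>inner (y i) (y j) - (if i = j then 1 else 0)\<bar> \<le> \<eta>"
    proof cases
      case 1 thus ?thesis using diag eta by simp
    next
      case 2 thus ?thesis using l(2) ij by (simp add: y_def)
    next
      case 3
      hence "\<bar>inner (z (l!j)) (z (l!i))\<bar> \<le> \<eta>" using l(2) ij by blast
      thus ?thesis using 3 by (simp add: y_def inner_commute)
    qed
    from ij consider "i = j" | "i < j" | "j < i" by linarith
    thus "\<bar>inner (y i) (A (y j)) - (if i = j then lam else 0)\<bar> \<le> \<eta>"
    proof cases
      case 1 thus ?thesis using l(3) ij by (simp add: y_def)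
    next
      case 2
      hence "\<bar>inner (A (z (l!i))) (z (l!j))\<bar> \<le> \<eta>" using l(2) ij by blast
      thus ?thesis using 2 sa_inner[OF zD zD, of "l!i" "l!j"] by (simp add: y_def)
    next
      case 3 thus ?thesis using l(2) ij by (simp add: y_def inner_commute)
    qed
  qed
qed


lemma sum_delta_sq: fixes a :: "nat \<Rightarrow> real" shows "(\<Sum>i<N. \<Sum>j<N. a i * a j * (if i = j then c else 0)) = c * (\<Sum>i<N. (a i)\<^sup>2)"
proof -
  have "(\<Sum>j<N. a i * a j * (if i = j then c else 0)) = (if i < N then c * (a i)\<^sup>2 else 0)" for i :: nat
  proof -
    have "(\<Sum>j<N. a i * a j * (if i = j then c else 0)) = (\<Sum>j<N. if j = i then c * (a i)\<^sup>2 else 0)"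
      by (rule sum.cong) (auto simp: power2_eq_square)
    thus ?thesis by (simp add: sum.delta')
  qed
  thus ?thesis by (simp add: sum_distrib_left)
qed

lemma step:
  assumes G: "finite G" and eps: "\<epsilon> > 0"
  shows "\<exists>w\<in>D. w \<noteq> 0 \<and> (\<forall>g\<in>G. inner g w = 0) \<and>
     \<bar>inner w (A w) - lam * (norm w)\<^sup>2\<bar> \<le> \<epsilon> * (norm w)\<^sup>2"
proof -
  define N where "N = Suc (card G)"
  define \<eta> where "\<eta> = min (1 / (2 * real N)) (\<epsilon> / (2 * real N * (1 + \<bar>lam\<bar>)))"
  have Npos: "real N > 0" by (simp add: N_def)
  have eta: "\<eta> > 0" using eps Npos by (simp add: \<eta>_def)
  have etaN1: "\<eta> * N \<le> 1/2"
  proof -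
    have "\<eta> \<le> 1 / (2 * real N)" by (simp add: \<eta>_def)
    hence "\<eta> * N \<le> 1 / (2 * real N) * N" using Npos by (intro mult_right_mono) auto
    thus ?thesis using Npos by simp
  qed
  have etaN2: "\<eta> * N * (1 + \<bar>lam\<bar>) \<le> \<epsilon> / 2"
  proof -
    have "\<eta> \<le> \<epsilon> / (2 * real N * (1 + \<bar>lam\<bar>))" by (simp add: \<eta>_def)
    define X where "X = real N * (1 + \<bar>lam\<bar>)"
    have X: "X > 0" using Npos by (simp add: X_def add_pos_nonneg)
    have "\<eta> \<le> \<epsilon> / (2 * X)" using \<open>\<eta> \<le> _\<close> by (simp add: X_def mult.assoc)
    hence "\<eta> * X \<le> \<epsilon> / (2 * X) * X"
      using X by (intro mult_right_mono) auto
    also have "\<dots> = \<epsilon> / 2" using X by (simp add: field_simps)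
    finally show ?thesis by (simp add: mult.assoc X_def)
  qed
  obtain y where yD: "\<forall>j. y j \<in> D" and yc: "\<forall>i<N. \<forall>j<N.
     \<bar>inner (y i) (y j) - (if i = j then 1 else 0)\<bar> \<le> \<eta> \<and>
     \<bar>inner (y i) (A (y j)) - (if i = j then lam else 0)\<bar> \<le> \<eta>"
    using family[OF eta, of N] by blast
  obtain a where a: "\<exists>j\<in>{..<N}. a j \<noteq> 0" "\<forall>g\<in>G. inner g (\<Sum>j\<in>{..<N}. a j *\<^sub>R y j) = 0"
    using exists_orth_comb[OF G, of "{..<N}" y] by (auto simp: N_def)
  define w where "w = (\<Sum>j<N. a j *\<^sub>R y j)"
  define s where "s = (\<Sum>i<N. (a i)\<^sup>2)"
  have s_pos: "s > 0"
  proof -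
    obtain j where j: "j < N" "a j \<noteq> 0" using a(1) by auto
    have "(a j)\<^sup>2 \<le> s" unfolding s_def by (rule member_le_sum) (use j in auto)
    moreover have "(a j)\<^sup>2 > 0" using j by simp
    ultimately show ?thesis by linarith
  qed
  have wD: "w \<in> D" unfolding w_def
    by (intro csubspace_sum[OF csubD] csubspace_scaleR[OF csubD]) (use yD in auto)
  have Aw: "A w = (\<Sum>j<N. a j *\<^sub>R A (y j))" unfolding w_def
    by (subst A_sum) (use yD csubspace_scaleR[OF csubD] in \<open>auto simp: A_scaleR\<close>)
  have nw: "(norm w)\<^sup>2 = (\<Sum>i<N. \<Sum>j<N. a i * a j * inner (y i) (y j))"
    apply (simp add: power2_norm_eq_inner w_def inner_sum_left inner_sum_right sum_distrib_left mult.assoc)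
    apply (intro sum.cong refl)
    apply (simp add: inner_commute)
    done
  have rw: "inner w (A w) = (\<Sum>i<N. \<Sum>j<N. a i * a j * inner (y i) (A (y j)))"
    unfolding Aw
    apply (simp add: w_def inner_sum_left inner_sum_right sum_distrib_left mult.assoc)
    apply (subst sum.swap)
    apply (simp add: mult.left_commute)
    done
  have e1: "\<bar>(norm w)\<^sup>2 - s\<bar> \<le> \<eta> * N * s"
  proof -
    have "(norm w)\<^sup>2 - s = (\<Sum>i<N. \<Sum>j<N. a i * a j * (inner (y i) (y j) - (if i = j then 1 else 0)))"
    proof -
      have d1: "(\<Sum>i<N. \<Sum>j<N. a i * a j * (if i = j then 1 else 0)) = s"
        using sum_delta_sq[where a=a and N=N and c=1] unfolding s_def by (simp only: mult_1_left)
      show ?thesis by (simp only: nw d1[symmetric] right_diff_distrib sum_subtractf)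
    qed
    also have "\<bar>\<dots>\<bar> \<le> \<eta> * N * s" unfolding s_def by (rule quad_bound) (use yc in auto)
    finally show ?thesis .
  qed
  have e2: "\<bar>inner w (A w) - lam * s\<bar> \<le> \<eta> * N * s"
  proof -
    have "inner w (A w) - lam * s = (\<Sum>i<N. \<Sum>j<N. a i * a j * (inner (y i) (A (y j)) - (if i = j then lam else 0)))"
    proof -
      have d1: "(\<Sum>i<N. \<Sum>j<N. a i * a j * (if i = j then lam else 0)) = lam * s"
        using sum_delta_sq[where a=a and N=N and c=lam] unfolding s_def by simp
      show ?thesis by (simp only: rw d1[symmetric] right_diff_distrib sum_subtractf)
    qed
    also have "\<bar>\<dots>\<bar> \<le> \<eta> * N * s" unfolding s_def by (rule quad_bound) (use yc in auto)
    finally show ?thesis .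
  qed
  have big: "(norm w)\<^sup>2 \<ge> s / 2"
  proof -
    have "\<eta> * N * s \<le> 1/2 * s" using etaN1 s_pos by (intro mult_right_mono) auto
    thus ?thesis using e1 by linarith
  qed
  have "\<bar>inner w (A w) - lam * (norm w)\<^sup>2\<bar> \<le> \<bar>inner w (A w) - lam * s\<bar> + \<bar>lam\<bar> * \<bar>(norm w)\<^sup>2 - s\<bar>"
  proof -
    have "inner w (A w) - lam * (norm w)\<^sup>2 = (inner w (A w) - lam * s) - lam * ((norm w)\<^sup>2 - s)"
      by (simp add: algebra_simps)
    thus ?thesis using abs_triangle_ineq4[of "inner w (A w) - lam * s" "lam * ((norm w)\<^sup>2 - s)"]
      by (simp add: abs_mult)
  qed
  also have "\<dots> \<le> \<eta> * N * s + \<bar>lam\<bar> * (\<eta> * N * s)"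
    using e1 e2 by (intro add_mono mult_left_mono) auto
  also have "\<dots> = (\<eta> * N * (1 + \<bar>lam\<bar>)) * s" by (simp add: algebra_simps)
  also have "\<dots> \<le> \<epsilon> / 2 * s" using etaN2 s_pos by (intro mult_right_mono) auto
  also have "\<dots> \<le> \<epsilon> * (norm w)\<^sup>2" using big eps by (simp add: field_simps)
  finally have fin: "\<bar>inner w (A w) - lam * (norm w)\<^sup>2\<bar> \<le> \<epsilon> * (norm w)\<^sup>2" .
  have "w \<noteq> 0" using big s_pos by auto
  thus ?thesis using wD fin a(2) unfolding w_def by (auto simp: lessThan_def)
qed

end
end


context
  fixes D :: "'a::chilbert set" and A :: "'a \<Rightarrow> 'a" and K :: nat and x :: "nat \<Rightarrow> nat \<Rightarrow> 'a"
  assumes sa: "self_adjoint D A"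
    and K: "K \<ge> 1"
    and inD: "\<And>n j. j \<in> {1..K} \<Longrightarrow> x n j \<in> D"
    and orthonormal: "\<And>n i j. i \<in> {1..K} \<Longrightarrow> j \<in> {1..K} \<Longrightarrow>
          cinner (x n i) (x n j) = (if i = j then 1 else 0)"
begin

lemma xnorm: "j \<in> {1..K} \<Longrightarrow> norm (x n j) = 1"
proof -
  assume j: "j \<in> {1..K}"
  have "complex_of_real ((norm (x n j))\<^sup>2) = 1" using orthonormal[OF j j, of n] by (simp add: cinner_self)
  hence "(norm (x n j))\<^sup>2 = 1" by (metis of_real_eq_1_iff)
  thus ?thesis using norm_ge_zero[of "x n j"] by (auto simp: power2_eq_1_iff)
qed

lemma WD: "cspan {x n j | j. j \<in> {1..K}} \<subseteq> D"
  by (rule cspan_subset[OF csubD[OF sa]]) (use inD in auto)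

lemma xW: "j \<in> {1..K} \<Longrightarrow> x n j \<in> cspan {x n j | j. j \<in> {1..K}}"
  by (rule cspan_superset) auto

lemma sumW: "(\<Sum>j\<in>{1..K}. scaleC (c j) (x n j)) \<in> cspan {x n j | j. j \<in> {1..K}}"
  by (intro csubspace_sum[OF csubspace_cspan] csubspace_scaleC[OF csubspace_cspan] xW)

lemma proj_W: "cproj (cspan {x n j | j. j \<in> {1..K}}) y = (\<Sum>j\<in>{1..K}. scaleC (cinner (x n j) y) (x n j))"
proof (rule cproj_eqI[OF csubspace_cspan sumW])
  fix v assume v: "v \<in> cspan {x n j | j. j \<in> {1..K}}"
  show "cinner v (y - (\<Sum>j\<in>{1..K}. scaleC (cinner (x n j) y) (x n j))) = 0"
  proof (rule cspan_orth[OF _ v])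
    fix b assume "b \<in> {x n j | j. j \<in> {1..K}}"
    then obtain i where i: "i \<in> {1..K}" "b = x n i" by auto
    have "(\<Sum>j\<in>{1..K}. cinner (x n i) (scaleC (cinner (x n j) y) (x n j)))
        = (\<Sum>j\<in>{1..K}. if j = i then cinner (x n i) y else 0)"
      by (rule sum.cong) (use i orthonormal in \<open>auto simp: cinner_scaleC_right\<close>)
    also have "\<dots> = cinner (x n i) y" using i by (simp add: sum.delta')
    finally show "cinner b (y - (\<Sum>j\<in>{1..K}. scaleC (cinner (x n j) y) (x n j))) = 0"
      using i by (simp add: cinner_diff_right cinner_sum_right)
  qed
qed

lemma proj_orth: "v \<in> cspan {x n j | j. j \<in> {1..K}} \<Longrightarrow>
   cinner v (y - cproj (cspan {x n j | j. j \<in> {1..K}}) y) = 0"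
  unfolding proj_W
proof (rule cspan_orth)
  fix b assume "b \<in> {x n j | j. j \<in> {1..K}}"
  then obtain i where i: "i \<in> {1..K}" "b = x n i" by auto
  have "(\<Sum>j\<in>{1..K}. cinner (x n i) (scaleC (cinner (x n j) y) (x n j)))
      = (\<Sum>j\<in>{1..K}. if j = i then cinner (x n i) y else 0)"
    by (rule sum.cong) (use i orthonormal in \<open>auto simp: cinner_scaleC_right\<close>)
  also have "\<dots> = cinner (x n i) y" using i by (simp add: sum.delta')
  finally show "cinner b (y - (\<Sum>j\<in>{1..K}. scaleC (cinner (x n j) y) (x n j))) = 0"
    using i by (simp add: cinner_diff_right cinner_sum_right)
qed

lemma W_expand: "v \<in> cspan {x n j | j. j \<in> {1..K}} \<Longrightarrow>
   v = (\<Sum>j\<in>{1..K}. scaleC (cinner (x n j) v) (x n j))"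
  using cproj_eqI[OF csubspace_cspan, of v _ v] proj_W[of n v] by simp

lemma spec_nonempty: "compr_spectrum (cspan {x n j | j. j \<in> {1..K}}) A \<noteq> {}"
proof -
  define M where "M = mat K K (\<lambda>(i,j). cinner (x n (Suc i)) (A (x n (Suc j))))"
  have M: "M \<in> carrier_mat K K" by (simp add: M_def)
  obtain k where "k \<in> spectrum M" using spectrum_non_empty[OF M] K by auto
  then obtain v where v: "v \<in> carrier_vec K" "v \<noteq> 0\<^sub>v K" "M *\<^sub>v v = k \<cdot>\<^sub>v v"
    unfolding spectrum_def eigenvalue_def eigenvector_def using M by auto
  define c where "c j = v $ (j - 1)" for j
  define u where "u = (\<Sum>j\<in>{1..K}. scaleC (c j) (x n j))"
  have uW: "u \<in> cspan {x n j | j. j \<in> {1..K}}" unfolding u_def by (rule sumW)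
  have uD: "u \<in> D" using uW WD by auto
  have cu: "cinner (x n i) u = c i" if i: "i \<in> {1..K}" for i
  proof -
    have "cinner (x n i) u = (\<Sum>j\<in>{1..K}. if j = i then c i else 0)"
      unfolding u_def cinner_sum_right
      by (rule sum.cong) (use i orthonormal in \<open>auto simp: cinner_scaleC_right\<close>)
    thus ?thesis using i by (simp add: sum.delta')
  qed
  have u0: "u \<noteq> 0"
  proof
    assume "u = 0"
    hence "c i = 0" if "i \<in> {1..K}" for i using cu[OF that] by simp
    hence ci: "c i = 0" if "i \<in> {1..K}" for i using that by blast
    have "v = 0\<^sub>v K"
    proof (rule eq_vecI)
      fix i assume "i < dim_vec (0\<^sub>v K)"
      hence "Suc i \<in> {1..K}" by simp
      hence "c (Suc i) = 0" by (rule ci)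
      thus "v $ i = 0\<^sub>v K $ i" using \<open>i < dim_vec (0\<^sub>v K)\<close> by (simp add: c_def)
    next
      show "dim_vec v = dim_vec (0\<^sub>v K)" using v(1) by simp
    qed
    thus False using v(2) by simp
  qed
  have Aux: "cinner (x n i) (A u) = k * c i" if i: "i \<in> {1..K}" for i
  proof -
    have "A u = (\<Sum>j\<in>{1..K}. scaleC (c j) (A (x n j)))"
      unfolding u_def using inD csubspace_scaleC[OF csubD[OF sa]]
      by (subst A_sum[OF sa]) (auto simp: A_scaleC[OF sa])
    hence "cinner (x n i) (A u) = (\<Sum>j\<in>{1..K}. c j * cinner (x n i) (A (x n j)))"
      by (simp add: cinner_sum_right cinner_scaleC_right)
    also have "\<dots> = (\<Sum>j<K. c (Suc j) * cinner (x n i) (A (x n (Suc j))))"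
      by (subst image_Suc_lessThan[symmetric], subst sum.reindex) auto
    also have "\<dots> = (M *\<^sub>v v) $ (i - 1)"
    proof -
      have i1: "i - 1 < K" "Suc (i - 1) = i" using i by auto
      have "(M *\<^sub>v v) $ (i - 1) = (\<Sum>j\<in>{0..<K}. row M (i - 1) $ j * v $ j)"
        using i1 M v(1) by (simp add: scalar_prod_def)
      also have "\<dots> = (\<Sum>j<K. c (Suc j) * cinner (x n i) (A (x n (Suc j))))"
        unfolding lessThan_atLeast0[symmetric]
        by (rule sum.cong) (use i1 M in \<open>auto simp: M_def c_def\<close>)
      finally show ?thesis by simp
    qed
    also have "\<dots> = k * c i"
    proof -
      have "i - 1 < dim_vec v" using i v(1) by auto
      thus ?thesis using v(3) by (simp add: c_def)
    qed
    finally show ?thesis .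
  qed
  have "cproj (cspan {x n j | j. j \<in> {1..K}}) (A u) = scaleC k u"
  proof -
    have "(\<Sum>j\<in>{1..K}. scaleC (cinner (x n j) (A u)) (x n j)) = (\<Sum>j\<in>{1..K}. scaleC (k * c j) (x n j))"
      by (rule sum.cong) (simp_all add: Aux)
    also have "\<dots> = scaleC k u" unfolding u_def by (simp add: scaleC_scaleC scaleC_sum_right_aux)
    finally show ?thesis unfolding proj_W .
  qed
  thus ?thesis unfolding compr_spectrum_def using uW u0 by blast
qed

end


lemma abs_comb_le: "\<bar>a::real\<bar> \<le> 1 \<Longrightarrow> \<bar>b\<bar> \<le> 1 \<Longrightarrow> \<bar>a * p + b * q\<bar> \<le> \<bar>p\<bar> + \<bar>q\<bar>"
proof -
  assume a: "\<bar>a\<bar> \<le> 1" and b: "\<bar>b\<bar> \<le> 1"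
  have "\<bar>a * p\<bar> \<le> \<bar>p\<bar>" unfolding abs_mult by (rule mult_left_le_one_le) (use a in auto)
  moreover have "\<bar>b * q\<bar> \<le> \<bar>q\<bar>" unfolding abs_mult by (rule mult_left_le_one_le) (use b in auto)
  ultimately show ?thesis by (meson abs_triangle_ineq add_mono order_trans)
qed

lemma infdist_approx:
  assumes "S \<noteq> {}" "e > 0"
  shows "\<exists>a\<in>S. dist x a < infdist x S + e"
proof -
  have "(INF a\<in>S. dist x a) < infdist x S + e" using assms by (simp add: infdist_notempty)
  moreover have "bdd_below ((\<lambda>a. dist x a) ` S)" by (rule bdd_belowI[of _ 0]) auto
  ultimately show ?thesis using cINF_less_iff[OF assms(1)] by blast
qed

context
  fixes D :: "'a::chilbert set" and A :: "'a \<Rightarrow> 'a" and K :: nat and x :: "nat \<Rightarrow> nat \<Rightarrow> 'a"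
    and lam :: real
  assumes sa: "self_adjoint D A"
    and K: "K \<ge> 1"
    and inD: "\<And>n j. j \<in> {1..K} \<Longrightarrow> x n j \<in> D"
    and orthonormal: "\<And>n i j. i \<in> {1..K} \<Longrightarrow> j \<in> {1..K} \<Longrightarrow>
          cinner (x n i) (x n j) = (if i = j then 1 else 0)"
    and weak0: "\<And>j y. j \<in> {1..K} \<Longrightarrow> (\<lambda>n. cinner y (x n j)) \<longlonglongrightarrow> 0"
    and lim: "(\<lambda>n. infdist (complex_of_real lam)
                 (compr_spectrum (cspan {x n j | j. j \<in> {1..K}}) A)) \<longlonglongrightarrow> 0"
begin

lemmas spec_ne = spec_nonempty[where D=D and A=A and K=K and x=x, OF sa K inD orthonormal]
lemmas WD' = WD[where D=D and A=A and K=K and x=x, OF sa K inD orthonormal]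
lemmas proj_orth' = proj_orth[where D=D and A=A and K=K and x=x, OF sa K inD orthonormal]
lemmas W_expand' = W_expand[where D=D and A=A and K=K and x=x, OF sa K inD orthonormal]
lemma xnorm': "j \<in> {1..K} \<Longrightarrow> norm (x n j) = 1"
proof -
  assume j: "j \<in> {1..K}"
  have "complex_of_real ((norm (x n j))\<^sup>2) = 1" using orthonormal[OF j j, of n] by (simp add: cinner_self)
  hence "(norm (x n j))\<^sup>2 = 1" by (metis of_real_eq_1_iff)
  thus ?thesis using norm_ge_zero[of "x n j"] by (auto simp: power2_eq_1_iff)
qed

lemma z_exists:
  "\<exists>z. (\<forall>n. z n \<in> D) \<and> (\<forall>n. norm (z n) = 1) \<and> (\<forall>f. (\<lambda>n. inner f (z n)) \<longlonglongrightarrow> 0)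
      \<and> (\<lambda>n. inner (z n) (A (z n))) \<longlonglongrightarrow> lam"
proof -
  define W where "W n = cspan {x n j | j. j \<in> {1..K}}" for n
  have ex: "\<exists>\<mu> v. v \<in> W n \<and> v \<noteq> 0 \<and> cproj (W n) (A v) = scaleC \<mu> v \<and>
     dist (complex_of_real lam) \<mu> < infdist (complex_of_real lam) (compr_spectrum (W n) A) + inverse (real (Suc n))" for n
  proof -
    obtain \<mu> where \<mu>: "\<mu> \<in> compr_spectrum (W n) A"
      "dist (complex_of_real lam) \<mu> < infdist (complex_of_real lam) (compr_spectrum (W n) A) + inverse (real (Suc n))"
      using infdist_approx[OF spec_ne[of n], of "inverse (real (Suc n))"]
      unfolding W_def by auto
    then obtain v where "v \<in> W n" "v \<noteq> 0" "cproj (W n) (A v) = scaleC \<mu> v"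
      unfolding compr_spectrum_def by blast
    thus ?thesis using \<mu>(2) by blast
  qed
  obtain \<mu> v where H: "\<And>n. v n \<in> W n \<and> v n \<noteq> 0 \<and> cproj (W n) (A (v n)) = scaleC (\<mu> n) (v n) \<and>
     dist (complex_of_real lam) (\<mu> n) < infdist (complex_of_real lam) (compr_spectrum (W n) A) + inverse (real (Suc n))"
    using ex by metis
  have vD: "v n \<in> D" for n using H[of n] WD'[of n] unfolding W_def by auto
  have mu_lim: "\<mu> \<longlonglongrightarrow> complex_of_real lam"
  proof (rule LIM_zero_cancel, rule Lim_null_comparison)
    show "\<forall>\<^sub>F n in sequentially. norm (\<mu> n - complex_of_real lam) \<le>
       infdist (complex_of_real lam) (compr_spectrum (W n) A) + inverse (real (Suc n))"
      using H by (auto simp: dist_norm norm_minus_commute less_imp_le)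
    show "(\<lambda>n. infdist (complex_of_real lam) (compr_spectrum (W n) A) + inverse (real (Suc n))) \<longlonglongrightarrow> 0"
      using tendsto_add[OF lim LIMSEQ_inverse_real_of_nat] unfolding W_def by simp
  qed
  define z where "z n = (1 / norm (v n)) *\<^sub>R v n" for n
  have zW: "z n \<in> W n" for n unfolding z_def W_def
    using H[of n] csubspace_scaleR[OF csubspace_cspan] unfolding W_def by blast
  have zD: "z n \<in> D" for n using zW[of n] WD'[of n] unfolding W_def by auto
  have zn: "norm (z n) = 1" for n using H[of n] by (simp add: z_def)
  have ray: "inner (z n) (A (z n)) = Re (\<mu> n)" for n
  proof -
    have o: "cinner (v n) (A (v n) - cproj (W n) (A (v n))) = 0"
      using proj_orth' H[of n] unfolding W_def by blast
    have eqc: "cinner (v n) (A (v n)) = cinner (v n) (scaleC (\<mu> n) (v n))"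
      using o H[of n] by (simp add: cinner_diff_right)
    have "inner (v n) (A (v n)) = Re (\<mu> n) * (norm (v n))\<^sup>2"
      using arg_cong[OF eqc, of Re] by (simp add: cinner_scaleC_right cinner_self)
    thus ?thesis using H[of n]
      by (simp add: z_def A_scaleR[OF sa vD] power2_eq_square field_simps)
  qed
  have weak: "(\<lambda>n. inner f (z n)) \<longlonglongrightarrow> 0" for f
  proof (rule Lim_null_comparison)
    show "\<forall>\<^sub>F n in sequentially. norm (inner f (z n)) \<le>
        (\<Sum>j\<in>{1..K}. \<bar>inner f (x n j)\<bar> + \<bar>inner (cJ f) (x n j)\<bar>)"
    proof (rule always_eventually, rule allI)
      fix n
      have ze: "z n = (\<Sum>j\<in>{1..K}. scaleC (cinner (x n j) (z n)) (x n j))"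
        using W_expand' zW[of n] unfolding W_def by blast
      have "inner f (z n) = (\<Sum>j\<in>{1..K}. (Re (cinner (x n j) (z n)) * inner f (x n j)
            + Im (cinner (x n j) (z n)) * inner f (cJ (x n j))))"
        by (subst ze) (simp add: inner_sum_right scaleC_def inner_add_right inner_diff_right)
      also have "\<dots> = (\<Sum>j\<in>{1..K}. inner (x n j) (z n) * inner f (x n j)
            + (- inner (x n j) (cJ (z n))) * (- inner (cJ f) (x n j)))"
        by (intro sum.cong refl) (simp add: inner_commute[of f "cJ _"] inner_cJ_left inner_commute[of "cJ f"])
      finally have eq: "inner f (z n) = \<dots>" .
      have "\<bar>inner f (z n)\<bar> \<le> (\<Sum>j\<in>{1..K}. \<bar>inner (x n j) (z n) * inner f (x n j)
            + (- inner (x n j) (cJ (z n))) * (- inner (cJ f) (x n j))\<bar>)"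
        unfolding eq by (rule sum_abs)
      also have "\<dots> \<le> (\<Sum>j\<in>{1..K}. \<bar>inner f (x n j)\<bar> + \<bar>inner (cJ f) (x n j)\<bar>)"
      proof (rule sum_mono)
        fix j assume j: "j \<in> {1..K}"
        have "\<bar>inner (x n j) (z n)\<bar> \<le> 1"
          using Cauchy_Schwarz_ineq2[of "x n j" "z n"] xnorm'[OF j] zn by simp
        moreover have "\<bar>- inner (x n j) (cJ (z n))\<bar> \<le> 1"
          using Cauchy_Schwarz_ineq2[of "x n j" "cJ (z n)"] xnorm'[OF j] zn by simp
        ultimately show "\<bar>inner (x n j) (z n) * inner f (x n j)
            + (- inner (x n j) (cJ (z n))) * (- inner (cJ f) (x n j))\<bar>
            \<le> \<bar>inner f (x n j)\<bar> + \<bar>inner (cJ f) (x n j)\<bar>"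
          using abs_comb_le by fastforce
      qed
      finally show "norm (inner f (z n)) \<le> (\<Sum>j\<in>{1..K}. \<bar>inner f (x n j)\<bar> + \<bar>inner (cJ f) (x n j)\<bar>)"
        by simp
    qed
  next
    have t: "(\<lambda>n. inner g (x n j)) \<longlonglongrightarrow> 0" if "j \<in> {1..K}" for g j
      using tendsto_Re[OF weak0[OF that, of g]] by simp
    show "(\<lambda>n. \<Sum>j\<in>{1..K}. \<bar>inner f (x n j)\<bar> + \<bar>inner (cJ f) (x n j)\<bar>) \<longlonglongrightarrow> 0"
      by (intro tendsto_null_sum tendsto_add_zero tendsto_rabs_zero t)
  qed
  have "(\<lambda>n. inner (z n) (A (z n))) \<longlonglongrightarrow> lam"
    using tendsto_Re[OF mu_lim] by (simp add: ray)
  thus ?thesis using zD zn weak by blast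
qed

end


lemma dense_seq:
  fixes D :: "'a::real_normed_vector set" and A :: "'a \<Rightarrow> 'a"
  assumes sep: "\<exists>S :: 'a set. countable S \<and> closure S = UNIV" and D0: "0 \<in> D"
  shows "\<exists>e::nat \<Rightarrow> 'a. (\<forall>m. e m \<in> D) \<and>
     (\<forall>x\<in>D. \<forall>\<epsilon>>0. \<exists>m. norm (x - e m) + norm (A x - A (e m)) < \<epsilon>)"
proof -
  obtain S :: "'a set" where S: "countable S" "closure S = UNIV" using sep by blast
  have appr: "\<exists>s\<in>S. norm (y - s) < r" if rpos: "r > 0" for y r
  proof -
    have "y \<in> closure S" using S by simp
    then obtain s where "s \<in> S" "dist s y < r" using closure_approachable rpos by blast
    thus ?thesis by (auto simp: dist_norm norm_minus_commute)
  qed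
  define T where "T = S \<times> S \<times> (UNIV :: nat set)"
  have cT: "countable T" unfolding T_def using S(1) by simp
  define P where "P t d \<longleftrightarrow> d \<in> D \<and> norm (d - fst t) < inverse (real (snd (snd t)))
     \<and> norm (A d - fst (snd t)) < inverse (real (snd (snd t)))" for t d
  define dd where "dd t = (if \<exists>d. P t d then SOME d. P t d else 0)" for t
  have ddD: "dd t \<in> D" for t
    using someI_ex[of "P t"] D0 by (auto simp: dd_def P_def)
  have ddP: "\<exists>d. P t d \<Longrightarrow> P t (dd t)" for t
    using someI_ex[of "P t"] by (auto simp: dd_def)
  define e where "e m = dd (from_nat_into T m)" for m
  show ?thesis
  proof (intro exI[of _ e] conjI ballI allI impI)
    show "e m \<in> D" for m by (simp add: e_def ddD)
  next
    fix x \<epsilon> :: real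
    fix x' assume x: "x' \<in> D"
    assume eps: "(\<epsilon>::real) > 0"
    obtain k where k: "k > 0" "inverse (real k) < \<epsilon> / 4"
      using ex_inverse_of_nat_less[of "\<epsilon>/4"] eps by auto
    have r: "inverse (real k) > 0" using k by simp
    obtain s1 where s1: "s1 \<in> S" "norm (x' - s1) < inverse (real k)" using appr[OF r] by blast
    obtain s2 where s2: "s2 \<in> S" "norm (A x' - s2) < inverse (real k)" using appr[OF r] by blast
    define t where "t = (s1, s2, k)"
    have tT: "t \<in> T" using s1 s2 by (simp add: t_def T_def)
    obtain m where m: "from_nat_into T m = t" using from_nat_into_surj[OF cT tT] by blast
    have "P t x'" using x s1 s2 by (simp add: P_def t_def norm_minus_commute)
    hence "P t (dd t)" using ddP[of t] by blast
    hence Pd: "P t (e m)" using m by (simp add: e_def)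
    have "norm (x' - e m) \<le> norm (x' - s1) + norm (e m - s1)"
      using norm_triangle_ineq4[of "x' - s1" "e m - s1"] by simp
    also have "\<dots> < 2 * inverse (real k)" using s1 Pd by (simp add: P_def t_def)
    finally have 1: "norm (x' - e m) < 2 * inverse (real k)" .
    have "norm (A x' - A (e m)) \<le> norm (A x' - s2) + norm (A (e m) - s2)"
      using norm_triangle_ineq4[of "A x' - s2" "A (e m) - s2"] by simp
    also have "\<dots> < 2 * inverse (real k)" using s2 Pd by (simp add: P_def t_def)
    finally have 2: "norm (A x' - A (e m)) < 2 * inverse (real k)" .
    show "\<exists>m. norm (x' - e m) + norm (A x' - A (e m)) < \<epsilon>"
      using 1 2 k by (intro exI[of _ m]) linarith
  qed
qed



theorem mainTheorem2:
  fixes D :: "'a::chilbert set" and A :: "'a \<Rightarrow> 'a"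
    and K :: nat and x :: "nat \<Rightarrow> nat \<Rightarrow> 'a" and lam :: real
  assumes separable: "\<exists>S :: 'a set. countable S \<and> closure S = UNIV"
    and sa: "self_adjoint D A"
    and K: "K \<ge> 1"
    and inD: "\<And>n j. j \<in> {1..K} \<Longrightarrow> x n j \<in> D"
    and orthonormal: "\<And>n i j. i \<in> {1..K} \<Longrightarrow> j \<in> {1..K} \<Longrightarrow>
          cinner (x n i) (x n j) = (if i = j then 1 else 0)"
    and weak0: "\<And>j y. j \<in> {1..K} \<Longrightarrow> (\<lambda>n. cinner y (x n j)) \<longlonglongrightarrow> 0"
    and lim: "(\<lambda>n. infdist (complex_of_real lam)
                 (compr_spectrum (cspan {x n j | j. j \<in> {1..K}}) A)) \<longlonglongrightarrow> 0"
  shows "lam \<in> Spu D A \<or> complex_of_real lam \<in> op_spectrum D A"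
proof (cases "complex_of_real lam \<in> op_spectrum D A")
  case True thus ?thesis by simp
next
  case False
  have csD: "csubspace D" using csubD[OF sa] .
  obtain z where zD: "\<And>n. z n \<in> D" and zn: "\<And>n. norm (z n) = 1"
    and zweak: "\<And>f. (\<lambda>n. inner f (z n)) \<longlonglongrightarrow> 0" and zray: "(\<lambda>n. inner (z n) (A (z n))) \<longlonglongrightarrow> lam"
    using z_exists[where D=D and A=A and K=K and x=x and lam=lam, OF sa K inD orthonormal weak0 lim] by blast
  obtain e :: "nat \<Rightarrow> 'a" where eD: "\<And>m. e m \<in> D"
    and edense: "\<And>x (\<epsilon>::real). x \<in> D \<Longrightarrow> \<epsilon> > 0 \<Longrightarrow> \<exists>m. norm (x - e m) + norm (A x - A (e m)) < \<epsilon>"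
    using dense_seq[OF separable csubspace_0[OF csD], of A] by blast
  define Q where "Q G \<epsilon> w \<longleftrightarrow> w \<in> D \<and> w \<noteq> 0 \<and> (\<forall>g\<in>G. inner g w = 0) \<and>
     \<bar>inner w (A w) - lam * (norm w)\<^sup>2\<bar> \<le> \<epsilon> * (norm w)\<^sup>2" for G \<epsilon> w
  define wsel where "wsel G \<epsilon> = (SOME w. Q G \<epsilon> w)" for G \<epsilon>
  have wsel: "Q G \<epsilon> (wsel G \<epsilon>)" if "finite G" "\<epsilon> > 0" for G \<epsilon>
  proof -
    have "\<exists>w. Q G \<epsilon> w"
      using step[where D=D and A=A and z=z and lam=lam, OF sa zD zn zweak zray that] unfolding Q_def by blast
    thus ?thesis unfolding wsel_def by (rule someI_ex)
  qed
  define GG where "GG U = U \<union> cJ ` U \<union> A ` U \<union> cJ ` A ` U" for U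
  define \<epsilon>s where "\<epsilon>s m = inverse (real (Suc m))" for m
  define B where "B = rec_nat {} (\<lambda>m Bm. Bm \<union> {e m, wsel (GG (Bm \<union> {e m})) (\<epsilon>s m)})"
  have B0: "B 0 = {}" by (simp add: B_def)
  have BS: "B (Suc m) = B m \<union> {e m, wsel (GG (B m \<union> {e m})) (\<epsilon>s m)}" for m by (simp add: B_def)
  have eps_pos: "\<epsilon>s m > 0" for m by (simp add: \<epsilon>s_def)
  have BfD: "finite (B m) \<and> B m \<subseteq> D" for m
  proof (induction m)
    case 0 thus ?case by (simp add: B0)
  next
    case (Suc m)
    have "finite (GG (B m \<union> {e m}))" using Suc by (simp add: GG_def)
    hence "Q (GG (B m \<union> {e m})) (\<epsilon>s m) (wsel (GG (B m \<union> {e m})) (\<epsilon>s m))" using wsel eps_pos by blast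
    thus ?case using Suc eD by (simp add: BS Q_def)
  qed
  define V where "V m = cspan (B m)" for m
  have VD: "V m \<subseteq> D" for m unfolding V_def using cspan_subset[OF csD] BfD by blast
  have part1: "\<forall>n. fin_dim_csubspace (V n) \<and> V n \<subseteq> D \<and> V n \<subseteq> V (Suc n)"
  proof
    fix n
    have 1: "fin_dim_csubspace (V n)" unfolding fin_dim_csubspace_def V_def using BfD[of n] by blast
    have "B n \<subseteq> B (Suc n)" by (simp add: BS subset_insertI2)
    hence 2: "V n \<subseteq> V (Suc n)" unfolding V_def by (rule cspan_mono)
    show "fin_dim_csubspace (V n) \<and> V n \<subseteq> D \<and> V n \<subseteq> V (Suc n)"
      using 1 2 VD[of n] by blast
  qed
  have part2: "\<forall>x\<in>D. \<forall>\<epsilon>>0. \<exists>n. \<exists>y\<in>V n. sqrt ((norm (x - y))\<^sup>2 + (norm (A x - A y))\<^sup>2) < \<epsilon>"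
  proof (intro ballI allI impI)
    fix x' and \<epsilon> :: real assume x': "x' \<in> D" and eps: "\<epsilon> > 0"
    obtain m where m: "norm (x' - e m) + norm (A x' - A (e m)) < \<epsilon>" using edense[OF x' eps] by blast
    have "e m \<in> V (Suc m)" unfolding V_def by (rule cspan_superset) (simp add: BS)
    moreover have "sqrt ((norm (x' - e m))\<^sup>2 + (norm (A x' - A (e m)))\<^sup>2) < \<epsilon>"
      using sqrt_sum_squares_le_sum_abs[of "norm (x' - e m)" "norm (A x' - A (e m))"] m by simp
    ultimately show "\<exists>n. \<exists>y\<in>V n. sqrt ((norm (x' - y))\<^sup>2 + (norm (A x' - A y))\<^sup>2) < \<epsilon>" by blast
  qed
  have bound: "infdist (complex_of_real lam) (compr_spectrum (V (Suc m)) A) \<le> \<epsilon>s m" for m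
  proof -
    define U where "U = B m \<union> {e m}"
    define w where "w = wsel (GG U) (\<epsilon>s m)"
    have UD: "U \<subseteq> D" using BfD[of m] eD by (simp add: U_def)
    have "finite (GG U)" using BfD[of m] by (simp add: GG_def U_def)
    hence Qw: "Q (GG U) (\<epsilon>s m) w" unfolding w_def using wsel eps_pos by blast
    hence wD: "w \<in> D" and w0: "w \<noteq> 0" and worth: "\<And>g. g \<in> GG U \<Longrightarrow> inner g w = 0"
      and wb: "\<bar>inner w (A w) - lam * (norm w)\<^sup>2\<bar> \<le> \<epsilon>s m * (norm w)\<^sup>2"
      unfolding Q_def by auto
    have BSm: "B (Suc m) = U \<union> {w}" by (simp add: BS U_def w_def insert_commute)
    define \<mu> where "\<mu> = inner w (A w) / (norm w)\<^sup>2"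
    have nw: "(norm w)\<^sup>2 > 0" using w0 by simp
    have mu_eq: "\<mu> * (norm w)\<^sup>2 = inner w (A w)" using nw by (simp add: \<mu>_def)
    have wV: "w \<in> V (Suc m)" unfolding V_def BSm by (rule cspan_superset) simp
    have proj: "cproj (V (Suc m)) (A w) = scaleC (complex_of_real \<mu>) w"
    proof (rule cproj_eqI[OF csubspace_cspan[of "B (Suc m)", folded V_def]])
      show "scaleC (complex_of_real \<mu>) w \<in> V (Suc m)" by (rule csubspace_scaleC[OF csubspace_cspan wV[unfolded V_def], folded V_def])
    next
      fix v assume v: "v \<in> V (Suc m)"
      show "cinner v (A w - scaleC (complex_of_real \<mu>) w) = 0"
      proof (rule cspan_orth[OF _ v[unfolded V_def]])
        fix b assume "b \<in> B (Suc m)"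
        hence "b \<in> U \<or> b = w" by (auto simp: BSm)
        thus "cinner b (A w - scaleC (complex_of_real \<mu>) w) = 0"
        proof
          assume bU: "b \<in> U"
          hence bD: "b \<in> D" using UD by auto
          have "inner b w = 0" "inner (cJ b) w = 0" "inner (A b) w = 0" "inner (cJ (A b)) w = 0"
            using worth bU by (auto simp: GG_def)
          hence c1: "cinner b w = 0" and c2: "cinner (A b) w = 0" by (simp_all add: cinner_eq_0_iff)
          have "cinner b (A w) = 0" using c2 sa_cinner[OF sa bD wD] by simp
          thus ?thesis using c1 cinner_scaleC_right[of b "complex_of_real \<mu>" w] by (simp add: cinner_diff_right)
        next
          assume bw: "b = w"
          have "cinner w (scaleC (complex_of_real \<mu>) w) = complex_of_real (\<mu> * (norm w)\<^sup>2)"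
            using cinner_scaleC_right[of w "complex_of_real \<mu>" w] by (simp add: cinner_self)
          thus ?thesis using bw mu_eq rayleigh_real[OF sa wD] by (simp add: cinner_diff_right)
        qed
      qed
    qed
    have inS: "complex_of_real \<mu> \<in> compr_spectrum (V (Suc m)) A"
      unfolding compr_spectrum_def using wV w0 proj by blast
    have "\<bar>\<mu> - lam\<bar> \<le> \<epsilon>s m"
    proof -
      have "\<bar>\<mu> - lam\<bar> * (norm w)\<^sup>2 = \<bar>inner w (A w) - lam * (norm w)\<^sup>2\<bar>"
        using nw mu_eq by (metis abs_mult abs_of_pos left_diff_distrib)
      hence "\<bar>\<mu> - lam\<bar> * (norm w)\<^sup>2 \<le> \<epsilon>s m * (norm w)\<^sup>2" using wb by simp
      thus ?thesis using nw by simp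
    qed
    hence "dist (complex_of_real lam) (complex_of_real \<mu>) \<le> \<epsilon>s m"
      by (simp add: dist_norm abs_minus_commute flip: of_real_diff)
    thus ?thesis by (rule infdist_le2[OF inS])
  qed
  have part3: "(\<lambda>n. infdist (complex_of_real lam) (compr_spectrum (V n) A)) \<longlonglongrightarrow> 0"
  proof (rule LIMSEQ_imp_Suc, rule Lim_null_comparison)
    show "\<forall>\<^sub>F n in sequentially. norm (infdist (complex_of_real lam) (compr_spectrum (V (Suc n)) A)) \<le> \<epsilon>s n"
      using bound by (simp add: infdist_nonneg)
    show "\<epsilon>s \<longlonglongrightarrow> 0" unfolding \<epsilon>s_def by (rule LIMSEQ_inverse_real_of_nat)
  qed
  have "lam \<in> Spu D A"
    unfolding Spu_def using part1 part2 part3 False by blast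
  thus ?thesis by simp
qed


end
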